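(* If $K$ is a compact convex subset of $\mathbb{R}^n$ of dimension $n$, then there exist regular unit normal vectors $u_0, \ldots, u_n$ of $K$, at distinct exposed points $x_0, \ldots, x_n$ of $K$ (with $x_i = K^{u_i}$), such that $u_0, \ldots, u_n$ are the outward unit normal vectors of the facets of some $n$-dimensional simplex in $\mathbb{R}^n$.
   Context: For a unit vector $u$, $K^u=\{x\in K : x\cdot u = h_K(u)\}$ where $h_K(u)=\max_{x\in K}x\cdot u$. A point $x$ is an exposed point of $K$ if $\{x\} = K^u$ for some unit vector $u$; such a direction $u$ is called a regular unit normal to $K$ (at $x$). *)

theory Defs
  imports "HOL-Analysis.Analysis"
begin

definition support_fun :: "'a::euclidean_space set \<Rightarrow> 'a \<Rightarrow> real" where
  "support_fun K u = Sup ((\<lambda>x. x \<bullet> u) ` K)"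

definition support_face :: "'a::euclidean_space set \<Rightarrow> 'a \<Rightarrow> 'a set" where
  "support_face K u = {x \<in> K. x \<bullet> u = support_fun K u}"

definition regular_normal_at :: "'a::euclidean_space set \<Rightarrow> 'a \<Rightarrow> 'a \<Rightarrow> bool" where
  "regular_normal_at K u x \<longleftrightarrow> norm u = 1 \<and> support_face K u = {x}"

definition simplex_facet_normals :: "(nat \<Rightarrow> 'a::euclidean_space) \<Rightarrow> bool" where
  "simplex_facet_normals u \<longleftrightarrow>
     (\<exists>v :: nat \<Rightarrow> 'a.
        inj_on v {..DIM('a)} \<and> \<not> affine_dependent (v ` {..DIM('a)}) \<and>
        (\<forall>i\<le>DIM('a). norm (u i) = 1 \<and>
           support_face (convex hull (v ` {..DIM('a)})) (u i)
             = convex hull (v ` ({..DIM('a)} - {i}))))"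

end

theory Submission imports Defs "Jordan_Normal_Form.Determinant" begin
no_notation scalar_prod (infix "\<bullet>" 70)
no_notation vec_nth (infixl "$" 90)

lemma sum_if_restrict:
  fixes g :: "nat \<Rightarrow> 'a::real_vector"
  assumes "finite A" "B \<subseteq> A"
  shows "(\<Sum>i\<in>A. (if i \<in> B then f i else 0) *\<^sub>R g i) = (\<Sum>i\<in>B. f i *\<^sub>R g i)"
proof -
  have "(\<Sum>i\<in>A. (if i \<in> B then f i else 0) *\<^sub>R g i) = (\<Sum>i\<in>A. if i \<in> B then f i *\<^sub>R g i else 0)"
    by (rule sum.cong) auto
  also have "\<dots> = (\<Sum>i\<in>A \<inter> B. f i *\<^sub>R g i)" using assms(1) by (simp add: sum.inter_restrict)
  also have "A \<inter> B = B" using assms(2) by auto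
  finally show ?thesis .
qed

lemma simplex_from_normals:
  fixes m :: "nat \<Rightarrow> 'a::euclidean_space"
  assumes sum0: "(\<Sum>i\<le>DIM('a). m i) = 0"
   and ind: "\<And>\<alpha> k. k \<le> DIM('a) \<Longrightarrow> \<alpha> k = 0 \<Longrightarrow> (\<Sum>i\<le>DIM('a). \<alpha> i *\<^sub>R m i) = 0
              \<Longrightarrow> \<forall>i\<le>DIM('a). \<alpha> i = 0"
  shows "simplex_facet_normals (\<lambda>i. m i /\<^sub>R norm (m i))"
proof -
  define n where "n = DIM('a)"
  have n1: "n \<ge> 1" unfolding n_def using DIM_positive by (simp add: Suc_le_eq)
  have ind': "\<And>\<alpha> k. k \<le> n \<Longrightarrow> \<alpha> k = 0 \<Longrightarrow> (\<Sum>i\<le>n. \<alpha> i *\<^sub>R m i) = 0 \<Longrightarrow> \<forall>i\<le>n. \<alpha> i = 0"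
    using ind unfolding n_def by blast
  have sum0': "(\<Sum>i\<le>n. m i) = 0" using sum0 n_def by simp
  have mnz: "m i \<noteq> 0" if "i \<le> n" for i
  proof
    assume "m i = 0"
    define k where "k = (if i = 0 then 1 else (0::nat))"
    have k: "k \<le> n" "k \<noteq> i" using n1 by (auto simp: k_def)
    have "(\<Sum>j\<le>n. (if j = i then 1 else 0) *\<^sub>R m j) = (\<Sum>j\<le>n. if j = i then m j else 0)"
      by (rule sum.cong) auto
    also have "\<dots> = m i" using that by simp
    finally have "(\<Sum>j\<le>n. (if j = i then 1 else 0) *\<^sub>R m j) = m i" .
    then have "\<forall>j\<le>n. (if j = i then 1 else (0::real)) = 0"
      using ind'[of k "\<lambda>j. if j = i then 1 else 0"] k \<open>m i = 0\<close> by auto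
    then show False using that by auto
  qed
  have minj: "inj_on m {..n}"
  proof (rule inj_onI, rule ccontr)
    fix i j assume ij: "i \<in> {..n}" "j \<in> {..n}" "m i = m j" "i \<noteq> j"
    define \<alpha> where "\<alpha> l = (if l = i then 0 else if l = j then 2 else (1::real))" for l
    have "(\<Sum>l\<le>n. \<alpha> l *\<^sub>R m l) = (\<Sum>l\<le>n. m l + ((if l = j then m l else 0) - (if l = i then m l else 0)))"
      by (rule sum.cong) (use ij(4) in \<open>auto simp: \<alpha>_def scaleR_2\<close>)
    also have "\<dots> = 0" using ij by (simp add: sum.distrib sum_subtractf sum.delta sum0')
    finally have "\<forall>l\<le>n. \<alpha> l = 0" using ind'[of i \<alpha>] ij by (auto simp: \<alpha>_def)
    then show False using ij by (auto simp: \<alpha>_def)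
  qed
  have spanU: "span (m ` ({..n} - {k})) = UNIV" if k: "k \<le> n" for k
  proof -
    let ?I = "{..n} - {k}"
    have injI: "inj_on m ?I" using minj by (rule inj_on_subset) auto
    have "independent (m ` ?I)"
      unfolding independent_explicit
    proof (intro conjI allI impI ballI)
      show "finite (m ` ?I)" by simp
      fix c v assume c: "(\<Sum>v\<in>m ` ?I. c v *\<^sub>R v) = 0" and v: "v \<in> m ` ?I"
      define \<alpha> where "\<alpha> i = (if i \<in> ?I then c (m i) else 0)" for i
      have "(\<Sum>i\<le>n. \<alpha> i *\<^sub>R m i) = (\<Sum>i\<in>?I. c (m i) *\<^sub>R m i)"
        unfolding \<alpha>_def by (rule sum_if_restrict) auto
      also have "\<dots> = (\<Sum>v\<in>m ` ?I. c v *\<^sub>R v)" by (simp add: sum.reindex[OF injI])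
      finally have "\<forall>i\<le>n. \<alpha> i = 0" using ind'[of k \<alpha>] k c by (auto simp: \<alpha>_def)
      then show "c v = 0" using v unfolding \<alpha>_def by (smt (verit) DiffE imageE atMost_iff)
    qed
    moreover have "card (m ` ?I) = n" using card_image[OF injI] k by simp
    ultimately have "UNIV \<subseteq> span (m ` ?I)"
      by (intro card_ge_dim_independent) (auto simp: n_def)
    then show ?thesis by auto
  qed
  have vex: "\<exists>v. \<forall>i\<le>n. i \<noteq> k \<longrightarrow> v \<bullet> m i = 1" if k: "k \<le> n" for k
  proof -
    let ?I = "{..n} - {k}"
    define L where "L y = (\<Sum>i\<in>?I. (y \<bullet> m i) *\<^sub>R m i)" for y
    have lin: "linear L" unfolding L_def
      by (simp add: linear_iff inner_add_left scaleR_add_left sum.distrib scaleR_sum_right)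
    have zero: "\<forall>i\<in>?I. y \<bullet> m i = c i" if Ly: "(\<Sum>i\<in>?I. (y \<bullet> m i - c i) *\<^sub>R m i) = 0" for y c
    proof -
      define \<alpha> where "\<alpha> i = (if i \<in> ?I then y \<bullet> m i - c i else 0)" for i
      have "(\<Sum>i\<le>n. \<alpha> i *\<^sub>R m i) = (\<Sum>i\<in>?I. (y \<bullet> m i - c i) *\<^sub>R m i)"
        unfolding \<alpha>_def by (rule sum_if_restrict) auto
      then have a0: "\<forall>i\<le>n. \<alpha> i = 0" using ind'[of k \<alpha>] k Ly by (auto simp: \<alpha>_def)
      show ?thesis
      proof
        fix i assume i: "i \<in> ?I"
        then have "\<alpha> i = 0" using a0 by auto
        then show "y \<bullet> m i = c i" using i by (simp add: \<alpha>_def)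
      qed
    qed
    have "inj L" unfolding linear_injective_0[OF lin]
    proof (intro allI impI)
      fix y assume "L y = 0"
      then have "\<forall>i\<in>?I. y \<bullet> m i = 0" using zero[of y "\<lambda>_. 0"] by (simp add: L_def)
      then have "y \<bullet> y = 0"
        using orthogonal_to_span[of y "m ` ?I" y] spanU[OF k] by (auto simp: Linear_Algebra.orthogonal_def)
      then show "y = 0" by simp
    qed
    then have "surj L" using lin by (simp add: linear_inj_imp_surj)
    then obtain y where y: "L y = (\<Sum>i\<in>?I. m i)" by (metis surj_def)
    have "(\<Sum>i\<in>?I. (y \<bullet> m i - 1) *\<^sub>R m i) = 0"
      using y by (simp add: L_def scaleR_diff_left sum_subtractf)
    then have "\<forall>i\<in>?I. y \<bullet> m i = 1" using zero[of y "\<lambda>_. 1"] by simp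
    then show ?thesis by auto
  qed
  obtain v where v: "\<And>k i. k \<le> n \<Longrightarrow> i \<le> n \<Longrightarrow> i \<noteq> k \<Longrightarrow> v k \<bullet> m i = 1"
    using vex by metis
  have vkk: "v k \<bullet> m k = - real n" if k: "k \<le> n" for k
  proof -
    have "0 = v k \<bullet> (\<Sum>i\<le>n. m i)" using sum0' by simp
    also have "\<dots> = (\<Sum>i\<le>n. v k \<bullet> m i)" by (simp add: inner_sum_right)
    also have "\<dots> = (\<Sum>i\<le>n. (if i = k then v k \<bullet> m k else 1))"
      by (rule sum.cong) (auto simp: v k)
    also have "\<dots> = v k \<bullet> m k + (\<Sum>i\<in>{..n}-{k}. (if i = k then v k \<bullet> m k else 1))"
      using k by (simp add: sum.remove)
    also have "(\<Sum>i\<in>{..n}-{k}. (if i = k then v k \<bullet> m k else 1)) = (\<Sum>i\<in>{..n}-{k}. (1::real))"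
      by (rule sum.cong) auto
    also have "\<dots> = real n" using k by simp
    finally show ?thesis by simp
  qed
  have vdot: "v k \<bullet> m i = (if i = k then - real n else 1)" if "k \<le> n" "i \<le> n" for k i
    using v vkk that by auto
  have vinj: "inj_on v {..n}"
  proof (rule inj_onI, rule ccontr)
    fix i j assume ij: "i \<in> {..n}" "j \<in> {..n}" "v i = v j" "i \<noteq> j"
    have "- real n = 1" using vdot[of i i] vdot[of j i] ij by simp
    then show False by linarith
  qed
  have aind: "\<not> affine_dependent (v ` {..n})"
  proof
    assume "affine_dependent (v ` {..n})"
    then obtain U where U: "sum U (v ` {..n}) = 0" "\<exists>z\<in>v ` {..n}. U z \<noteq> 0"
        "(\<Sum>z\<in>v ` {..n}. U z *\<^sub>R z) = 0"
      by (auto simp: affine_dependent_explicit_finite)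
    obtain j where j: "j \<le> n" "U (v j) \<noteq> 0" using U(2) by auto
    have s1: "(\<Sum>k\<le>n. U (v k)) = 0" using U(1) by (simp add: sum.reindex[OF vinj])
    have "0 = (\<Sum>z\<in>v ` {..n}. U z *\<^sub>R z) \<bullet> m j" using U(3) by simp
    also have "\<dots> = (\<Sum>k\<le>n. U (v k) * (v k \<bullet> m j))"
      by (simp add: sum.reindex[OF vinj] inner_sum_left)
    also have "\<dots> = (\<Sum>k\<le>n. U (v k) - (if k = j then (real n + 1) * U (v j) else 0))"
      by (rule sum.cong) (auto simp: vdot j algebra_simps)
    also have "\<dots> = - (real n + 1) * U (v j)"
      using j s1 by (simp add: sum_subtractf sum.delta algebra_simps)
    finally show False using j by simp
  qed
  show ?thesis
    unfolding simplex_facet_normals_def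
  proof (rule exI[of _ v], intro conjI allI impI)
    show "inj_on v {..DIM('a)}" using vinj n_def by simp
    show "\<not> affine_dependent (v ` {..DIM('a)})" using aind n_def by simp
    fix i assume i: "i \<le> DIM('a)"
    then have i': "i \<le> n" by (simp add: n_def)
    have nm: "norm (m i) > 0" using mnz[OF i'] by simp
    show "norm (m i /\<^sub>R norm (m i)) = 1" using nm by simp
    let ?V = "v ` {..n}" and ?V' = "v ` ({..n} - {i})"
    have Vins: "?V = insert (v i) ?V'" using i' by auto
    obtain j where j: "j \<le> n" "j \<noteq> i" using n1 by (metis le_refl zero_le nat_le_linear le_zero_eq one_neq_zero)
    have V'ne: "?V' \<noteq> {}" using j by auto
    have mv: "m i \<bullet> v k = (if i = k then - real n else 1)" if "k \<le> n" for k
      using vdot[OF that i'] by (simp add: inner_commute)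
    have hle: "convex hull ?V \<subseteq> {z. m i \<bullet> z \<le> 1}"
      by (rule hull_minimal) (auto simp: convex_halfspace_le mv)
    have heq: "convex hull ?V' \<subseteq> {z. m i \<bullet> z = 1}"
      by (rule hull_minimal) (auto simp: convex_hyperplane mv)
    have hsub: "convex hull ?V' \<subseteq> convex hull ?V" by (rule hull_mono) auto
    have dotu: "z \<bullet> (m i /\<^sub>R norm (m i)) = (z \<bullet> m i) / norm (m i)" for z
      by (simp add: divide_inverse)
    have sf: "support_fun (convex hull ?V) (m i /\<^sub>R norm (m i)) = 1 / norm (m i)"
      unfolding support_fun_def
    proof (rule cSup_eq_maximum)
      have "v j \<in> convex hull ?V" using j by (auto intro: hull_inc)
      moreover have "v j \<bullet> (m i /\<^sub>R norm (m i)) = 1 / norm (m i)" using vdot[of j i] j i' dotu[of "v j"] by simp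
      ultimately show "1 / norm (m i) \<in> (\<lambda>x. x \<bullet> (m i /\<^sub>R norm (m i))) ` (convex hull ?V)" by force
    next
      fix t assume "t \<in> (\<lambda>x. x \<bullet> (m i /\<^sub>R norm (m i))) ` (convex hull ?V)"
      then obtain z where z: "z \<in> convex hull ?V" "t = z \<bullet> (m i /\<^sub>R norm (m i))" by auto
      have "z \<bullet> m i \<le> 1" using hle z(1) by (auto simp: inner_commute)
      then show "t \<le> 1 / norm (m i)" using z(2) dotu nm by (simp add: divide_right_mono)
    qed
    have "support_face (convex hull ?V) (m i /\<^sub>R norm (m i)) = {z \<in> convex hull ?V. z \<bullet> m i = 1}"
      unfolding support_face_def sf dotu using nm by (auto simp: field_simps)
    also have "\<dots> = convex hull ?V'"
    proof
      show "convex hull ?V' \<subseteq> {z \<in> convex hull ?V. z \<bullet> m i = 1}"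
        using heq hsub by (auto simp: inner_commute)
      show "{z \<in> convex hull ?V. z \<bullet> m i = 1} \<subseteq> convex hull ?V'"
      proof
        fix z assume z: "z \<in> {z \<in> convex hull ?V. z \<bullet> m i = 1}"
        then obtain a t y where aty: "a \<ge> 0" "t \<ge> 0" "a + t = 1" "y \<in> convex hull ?V'"
            "z = a *\<^sub>R v i + t *\<^sub>R y"
          using Vins convex_hull_insert[OF V'ne, of "v i"] by auto
        have "y \<bullet> m i = 1" using heq aty(4) by (auto simp: inner_commute)
        then have "z \<bullet> m i = a * (- real n) + t" using aty(5) vdot[of i i] i'
          by (simp add: inner_add_left)
        then have "a * (real n + 1) = 0" using z aty(3) by (simp add: algebra_simps)
        then have "a = 0" by simp
        then show "z \<in> convex hull ?V'" using aty by simp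
      qed
    qed
    finally show "support_face (convex hull (v ` {..DIM('a)})) (m i /\<^sub>R norm (m i)) =
                  convex hull (v ` ({..DIM('a)} - {i}))" by (simp add: n_def)
  qed
qed

definition Mx :: "(nat \<Rightarrow> 'a::euclidean_space) \<Rightarrow> nat \<Rightarrow> (nat \<Rightarrow> 'a) \<Rightarrow> real mat" where
  "Mx b n x = mat (Suc n) (Suc n) (\<lambda>(r,c). if c = 0 then 1 else x r \<bullet> b (c - 1))"

definition DM :: "(nat \<Rightarrow> 'a::euclidean_space) \<Rightarrow> nat \<Rightarrow> (nat \<Rightarrow> 'a) \<Rightarrow> real" where
  "DM b n x = det (Mx b n x)"

lemma Mx_carrier: "Mx b n x \<in> carrier_mat (Suc n) (Suc n)"
  by (simp add: Mx_def)

lemma DM_formula: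
  "DM b n x = (\<Sum>p\<in>{p. p permutes {0..<Suc n}}. signof p *
      (\<Prod>r=0..<Suc n. (if p r = 0 then 1 else x r \<bullet> b (p r - 1))))"
  unfolding DM_def det_def'[OF Mx_carrier]
proof (rule sum.cong[OF refl], rule arg_cong[where f = "\<lambda>t. _ * t"], rule prod.cong[OF refl])
  fix p r assume p: "p \<in> {p. p permutes {0..<Suc n}}" and r: "r \<in> {0..<Suc n}"
  have "p r < Suc n" using p r by (auto dest: permutes_in_image)
  then show "Mx b n x $$ (r, p r) = (if p r = 0 then 1 else x r \<bullet> b (p r - 1))"
    using r by (simp add: Mx_def)
qed

lemma DM_identical:
  assumes "i \<le> n" "k \<le> n" "i \<noteq> k" "x i = x k"
  shows "DM b n x = 0"
  unfolding DM_def
  by (rule det_identical_rows[OF Mx_carrier, of i k]) (use assms in \<open>auto simp: Mx_def\<close>)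

lemma DM_affine_row:
  assumes i: "i \<le> n"
  shows "\<exists>C W. \<forall>y. DM b n (x(i:=y)) = C + W \<bullet> y"
proof -
  let ?P = "{p. p permutes {0..<Suc n}}"
  define a where "a p = signof p * (\<Prod>r\<in>{0..<Suc n}-{i}. (if p r = 0 then 1 else x r \<bullet> b (p r - 1)))" for p
  define C where "C = (\<Sum>p\<in>?P. a p * (if p i = 0 then 1 else 0))"
  define W where "W = (\<Sum>p\<in>?P. a p *\<^sub>R (if p i = 0 then 0 else b (p i - 1)))"
  have "DM b n (x(i:=y)) = C + W \<bullet> y" for y
  proof -
    have "DM b n (x(i:=y)) = (\<Sum>p\<in>?P. a p * (if p i = 0 then 1 else y \<bullet> b (p i - 1)))"
      unfolding DM_formula
    proof (rule sum.cong[OF refl])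
      fix p
      have "(\<Prod>r=0..<Suc n. (if p r = 0 then 1 else (x(i:=y)) r \<bullet> b (p r - 1))) =
          (if p i = 0 then 1 else y \<bullet> b (p i - 1)) *
          (\<Prod>r\<in>{0..<Suc n}-{i}. (if p r = 0 then 1 else (x(i:=y)) r \<bullet> b (p r - 1)))"
        using i by (subst prod.remove[of _ i]) auto
      also have "(\<Prod>r\<in>{0..<Suc n}-{i}. (if p r = 0 then 1 else (x(i:=y)) r \<bullet> b (p r - 1))) =
          (\<Prod>r\<in>{0..<Suc n}-{i}. (if p r = 0 then 1 else x r \<bullet> b (p r - 1)))"
        by (rule prod.cong) auto
      finally show "signof p * (\<Prod>r=0..<Suc n. (if p r = 0 then 1 else (x(i:=y)) r \<bullet> b (p r - 1))) =
          a p * (if p i = 0 then 1 else y \<bullet> b (p i - 1))"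
        by (simp add: a_def)
    qed
    also have "\<dots> = (\<Sum>p\<in>?P. a p * (if p i = 0 then 1 else 0) + (a p *\<^sub>R (if p i = 0 then 0 else b (p i - 1))) \<bullet> y)"
      by (rule sum.cong) (auto simp: inner_commute)
    also have "\<dots> = C + W \<bullet> y"
      by (simp add: C_def W_def sum.distrib inner_sum_left)
    finally show ?thesis .
  qed
  then show ?thesis by blast
qed

lemma DM_cont: "continuous_on UNIV (DM b n)"
proof -
  have "continuous_on UNIV (\<lambda>x. (\<Sum>p\<in>{p. p permutes {0..<Suc n}}. signof p *
      (\<Prod>r=0..<Suc n. (if p r = 0 then 1 else x r \<bullet> b (p r - 1)))))"
  proof -
    have c1: "continuous_on UNIV (\<lambda>x::nat\<Rightarrow>'a. x r \<bullet> c)" for r c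
      by (rule continuous_on_inner[OF continuous_on_product_coordinates continuous_on_const])
    have c2: "continuous_on UNIV (\<lambda>x::nat\<Rightarrow>'a. if p r = 0 then 1 else x r \<bullet> b (p r - 1))" for p r
      using c1 by (cases "p r = 0") auto
    show ?thesis
      by (intro continuous_on_sum continuous_on_mult continuous_on_const continuous_on_prod c2)
  qed
  moreover have "DM b n = (\<lambda>x. (\<Sum>p\<in>{p. p permutes {0..<Suc n}}. signof p *
      (\<Prod>r=0..<Suc n. (if p r = 0 then 1 else x r \<bullet> b (p r - 1)))))"
    by (rule ext) (rule DM_formula)
  ultimately show ?thesis by simp
qed


lemma basis_enum:
  assumes b: "bij_betw b {..<DIM('a)} (Basis::'a::euclidean_space set)"
  shows "\<And>c c'. c < DIM('a) \<Longrightarrow> c' < DIM('a) \<Longrightarrow> b c \<bullet> b c' = (if c = c' then 1 else 0)"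
    and "\<And>x y::'a. x \<bullet> y = (\<Sum>c<DIM('a). (x \<bullet> b c) * (y \<bullet> b c))"
    and "\<And>x::'a. x = (\<Sum>c<DIM('a). (x \<bullet> b c) *\<^sub>R b c)"
proof -
  fix c c' assume c: "c < DIM('a)" "c' < DIM('a)"
  have "b c \<in> Basis" "b c' \<in> Basis" using b c by (auto simp: bij_betw_def)
  moreover have "b c = b c' \<longleftrightarrow> c = c'" using b c by (auto simp: bij_betw_def inj_on_def)
  ultimately show "b c \<bullet> b c' = (if c = c' then 1 else 0)" by (simp add: inner_Basis)
next
  fix x y :: 'a
  show "x \<bullet> y = (\<Sum>c<DIM('a). (x \<bullet> b c) * (y \<bullet> b c))"
  proof -
    have "x \<bullet> y = (\<Sum>e\<in>Basis. (x \<bullet> e) * (y \<bullet> e))" by (rule euclidean_inner)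
    then show ?thesis using sum.reindex_bij_betw[OF b, of "\<lambda>e. (x \<bullet> e) * (y \<bullet> e)"] by simp
  qed
next
  fix x :: 'a
  show "x = (\<Sum>c<DIM('a). (x \<bullet> b c) *\<^sub>R b c)"
    using sum.reindex_bij_betw[OF b, of "\<lambda>e. (x \<bullet> e) *\<^sub>R e"] by (simp add: euclidean_representation)
qed

lemma Mx_mult_vec:
  assumes r: "r \<le> n" and v: "dim_vec v = Suc n"
  shows "(Mx b n x *\<^sub>v v) $ r = v $ 0 + (\<Sum>c<n. (x r \<bullet> b c) * v $ (Suc c))"
proof -
  have "(Mx b n x *\<^sub>v v) $ r = scalar_prod (row (Mx b n x) r) v"
    using r by (simp add: Mx_def)
  also have "\<dots> = (\<Sum>c\<in>{0..<Suc n}. (if c = 0 then 1 else x r \<bullet> b (c - 1)) * v $ c)"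
    using r v by (simp add: Mx_def scalar_prod_def)
  also have "\<dots> = v $ 0 + (\<Sum>c<n. (x r \<bullet> b c) * v $ (Suc c))"
    unfolding sum.atLeast0_lessThan_Suc_shift by (simp add: atLeast0LessThan)
  finally show ?thesis .
qed

lemma DM_zero_hyp:
  assumes b: "bij_betw b {..<DIM('a)} (Basis::'a::euclidean_space set)"
    and D: "DM b DIM('a) x = 0"
  shows "\<exists>z c. z \<noteq> 0 \<and> (\<forall>r\<le>DIM('a). x r \<bullet> z = c)"
proof -
  let ?n = "DIM('a)"
  obtain v where v: "v \<in> carrier_vec (Suc ?n)" "v \<noteq> 0\<^sub>v (Suc ?n)" "Mx b ?n x *\<^sub>v v = 0\<^sub>v (Suc ?n)"
    using D det_0_iff_vec_prod_zero[OF Mx_carrier, of b ?n x] by (auto simp: DM_def)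
  define z where "z = (\<Sum>c<?n. v $ (Suc c) *\<^sub>R b c)"
  have dimv: "dim_vec v = Suc ?n" using v(1) by simp
  have xz: "x r \<bullet> z = (\<Sum>c<?n. (x r \<bullet> b c) * v $ (Suc c))" for r
    by (simp add: z_def inner_sum_right mult.commute)
  have row: "v $ 0 + x r \<bullet> z = 0" if "r \<le> ?n" for r
  proof -
    have "(Mx b ?n x *\<^sub>v v) $ r = 0" using v(3) that by simp
    then show ?thesis using Mx_mult_vec[OF that dimv, of b x] xz[of r] by simp
  qed
  have "z \<noteq> 0"
  proof
    assume z0: "z = 0"
    have zb: "z \<bullet> b c = v $ (Suc c)" if "c < ?n" for c
    proof -
      have "z \<bullet> b c = (\<Sum>c'<?n. v $ (Suc c') * (b c' \<bullet> b c))" by (simp add: z_def inner_sum_left)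
      also have "\<dots> = (\<Sum>c'<?n. if c' = c then v $ (Suc c) else 0)"
        by (rule sum.cong) (use that basis_enum(1)[OF b] in auto)
      also have "\<dots> = v $ (Suc c)" using that by simp
      finally show ?thesis .
    qed
    have "v = 0\<^sub>v (Suc ?n)"
    proof (rule eq_vecI)
      fix i assume "i < dim_vec (0\<^sub>v (Suc ?n))"
      then have i: "i < Suc ?n" by simp
      show "v $ i = 0\<^sub>v (Suc ?n) $ i"
      proof (cases i)
        case 0 then show ?thesis using row[of 0] z0 i by simp
      next
        case (Suc c) then show ?thesis using zb[of c] z0 i by simp
      qed
    next
      show "dim_vec v = dim_vec (0\<^sub>v (Suc ?n))" using dimv by simp
    qed
    then show False using v(2) by simp
  qed
  moreover have "\<forall>r\<le>?n. x r \<bullet> z = - v $ 0" using row by (simp add: eq_neg_iff_add_eq_0 add.commute)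
  ultimately show ?thesis by blast
qed

lemma hyp_DM_zero:
  assumes b: "bij_betw b {..<DIM('a)} (Basis::'a::euclidean_space set)"
    and z: "z \<noteq> 0" and h: "\<forall>r\<le>DIM('a). x r \<bullet> z = c0"
  shows "DM b DIM('a) x = 0"
proof -
  let ?n = "DIM('a)"
  define v where "v = vec (Suc ?n) (\<lambda>c. if c = 0 then - c0 else z \<bullet> b (c - 1))"
  have dimv: "dim_vec v = Suc ?n" by (simp add: v_def)
  have "Mx b ?n x *\<^sub>v v = 0\<^sub>v (Suc ?n)"
  proof (rule eq_vecI)
    fix r assume "r < dim_vec (0\<^sub>v (Suc ?n))"
    then have r: "r \<le> ?n" by simp
    have "(Mx b ?n x *\<^sub>v v) $ r = - c0 + (\<Sum>c<?n. (x r \<bullet> b c) * (z \<bullet> b c))"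
      using Mx_mult_vec[OF r dimv] by (simp add: v_def)
    also have "\<dots> = - c0 + x r \<bullet> z" using basis_enum(2)[OF b, of "x r" z] by simp
    also have "\<dots> = 0" using h r by simp
    finally show "(Mx b ?n x *\<^sub>v v) $ r = 0\<^sub>v (Suc ?n) $ r" using r by simp
  qed (simp add: Mx_def)
  moreover have "v \<noteq> 0\<^sub>v (Suc ?n)"
  proof
    assume v0: "v = 0\<^sub>v (Suc ?n)"
    have "z \<bullet> b c = 0" if "c < ?n" for c
    proof -
      have "v $ (Suc c) = 0" using v0 that by simp
      then show ?thesis using that by (simp add: v_def)
    qed
    then have "(\<Sum>c<?n. (z \<bullet> b c) *\<^sub>R b c) = 0" by simp
    then have "z = 0" using basis_enum(3)[OF b, of z] by argo
    then show False using z by simp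
  qed
  moreover have "v \<in> carrier_vec (Suc ?n)" by (simp add: v_def)
  ultimately show ?thesis
    using det_0_iff_vec_prod_zero[OF Mx_carrier, of b ?n x] by (auto simp: DM_def)
qed


lemma sum_fun_upd_eq:
  fixes f :: "'b \<Rightarrow> 'c::ab_group_add"
  assumes "finite A" "i \<in> A"
  shows "(\<Sum>j\<in>A. f ((x(i:=y)) j)) = (\<Sum>j\<in>A. f (x j)) - f (x i) + f y"
proof -
  have "(\<Sum>j\<in>A. f ((x(i:=y)) j)) = f y + (\<Sum>j\<in>A-{i}. f ((x(i:=y)) j))"
    using assms by (subst sum.remove[of _ i]) auto
  also have "(\<Sum>j\<in>A-{i}. f ((x(i:=y)) j)) = (\<Sum>j\<in>A-{i}. f (x j))" by (rule sum.cong) auto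
  also have "\<dots> = (\<Sum>j\<in>A. f (x j)) - f (x i)" using assms by (simp add: sum_diff1)
  finally show ?thesis by simp
qed

lemma QU_alg:
  fixes a y S :: "'a::real_inner"
  shows "real (Suc n) * ((norm y)\<^sup>2 - (norm a)\<^sup>2) - ((norm (S - a + y))\<^sup>2 - (norm S)\<^sup>2)
       = 2 * ((real (Suc n) *\<^sub>R a - S) \<bullet> (y - a)) + real n * (norm (y - a))\<^sup>2"
proof -
  define d where "d = y - a"
  have y: "y = a + d" by (simp add: d_def)
  have sq: "(norm (u + v))\<^sup>2 = (norm u)\<^sup>2 + 2 * (u \<bullet> v) + (norm v)\<^sup>2" for u v :: 'a
    by (simp add: power2_norm_eq_inner inner_add_left inner_add_right inner_commute)
  have e: "S - a + y = S + d" by (simp add: d_def)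
  have h2: "(norm (S - a + y))\<^sup>2 = (norm S)\<^sup>2 + 2 * (S \<bullet> d) + (norm d)\<^sup>2"
    unfolding e by (rule sq)
  have h1: "(norm y)\<^sup>2 = (norm a)\<^sup>2 + 2 * (a \<bullet> d) + (norm d)\<^sup>2" unfolding y by (rule sq)
  have h3: "(real (Suc n) *\<^sub>R a - S) \<bullet> d = real (Suc n) * (a \<bullet> d) - S \<bullet> d"
    by (simp add: inner_diff_left)
  show ?thesis unfolding h1 h2 d_def[symmetric] h3 by (simp add: of_nat_Suc algebra_simps)
qed

lemma double_sum_diff:
  fixes x :: "nat \<Rightarrow> 'a::real_vector"
  assumes "finite A"
  shows "(\<Sum>j\<in>A. \<Sum>l\<in>A. (a j - a l) *\<^sub>R (x j - x l))
       = 2 *\<^sub>R (\<Sum>i\<in>A. a i *\<^sub>R (real (card A) *\<^sub>R x i - (\<Sum>j\<in>A. x j)))"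
proof -
  define S where "S = (\<Sum>j\<in>A. x j)"
  define P where "P = (\<Sum>j\<in>A. a j *\<^sub>R x j)"
  define B where "B = (\<Sum>j\<in>A. a j)"
  have inner: "(\<Sum>l\<in>A. (a j - a l) *\<^sub>R (x j - x l)) =
       real (card A) *\<^sub>R (a j *\<^sub>R x j) - a j *\<^sub>R S - B *\<^sub>R x j + P" for j
  proof -
    have e: "(a j - a l) *\<^sub>R (x j - x l) = a j *\<^sub>R x j - a j *\<^sub>R x l - a l *\<^sub>R x j + a l *\<^sub>R x l" for l
      by (simp add: algebra_simps)
    show ?thesis unfolding e
      by (simp add: sum.distrib sum_subtractf S_def P_def B_def scaleR_sum_right scaleR_sum_left)
        (simp add: sum_constant_scaleR)
  qed
  have cP: "(\<Sum>j\<in>A. (real (card A) * a j) *\<^sub>R x j) = real (card A) *\<^sub>R P"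
    by (simp add: P_def scaleR_sum_right)
  have "(\<Sum>j\<in>A. \<Sum>l\<in>A. (a j - a l) *\<^sub>R (x j - x l))
      = real (card A) *\<^sub>R P - B *\<^sub>R S - B *\<^sub>R S + real (card A) *\<^sub>R P"
    unfolding inner
    by (simp add: sum.distrib sum_subtractf scaleR_sum_right[symmetric] scaleR_sum_left[symmetric]
        P_def[symmetric] S_def[symmetric] B_def[symmetric] sum_constant_scaleR cP)
  also have "\<dots> = 2 *\<^sub>R (real (card A) *\<^sub>R P - B *\<^sub>R S)" by (simp only: scaleR_2) (simp add: algebra_simps)
  also have "real (card A) *\<^sub>R P - B *\<^sub>R S = (\<Sum>i\<in>A. a i *\<^sub>R (real (card A) *\<^sub>R x i - S))"
    by (simp add: P_def B_def scaleR_diff_right sum_subtractf scaleR_sum_right scaleR_sum_left mult.commute)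
  finally show ?thesis by (simp add: S_def)
qed

lemma double_sum_sq:
  fixes a :: "nat \<Rightarrow> real"
  assumes "finite A" "(\<Sum>j\<in>A. \<Sum>l\<in>A. (a j - a l)\<^sup>2) = 0" "j \<in> A" "l \<in> A"
  shows "a j = a l"
proof -
  have nn: "0 \<le> (\<Sum>l\<in>A. (a j - a l)\<^sup>2)" for j by (intro sum_nonneg) simp
  have "(\<Sum>l\<in>A. (a j - a l)\<^sup>2) = 0"
    using sum_nonneg_eq_0_iff[OF assms(1), of "\<lambda>j. \<Sum>l\<in>A. (a j - a l)\<^sup>2"] nn assms(2,3) by blast
  moreover have "0 \<le> (a j - a l')\<^sup>2" for l' by simp
  ultimately have "(a j - a l)\<^sup>2 = 0"
    using sum_nonneg_eq_0_iff[OF assms(1), of "\<lambda>l. (a j - a l)\<^sup>2"] assms(4) by blast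
  then show ?thesis by simp
qed

theorem theorem3p3:
  fixes K :: "'a::euclidean_space set"
  assumes "compact K" and "convex K" and "aff_dim K = int DIM('a)"
  shows "\<exists>(u :: nat \<Rightarrow> 'a) (x :: nat \<Rightarrow> 'a).
           inj_on x {..DIM('a)} \<and>
           (\<forall>i\<le>DIM('a). regular_normal_at K (u i) (x i)) \<and>
           simplex_facet_normals u"
proof -
  define n where "n = DIM('a)"
  have n1: "1 \<le> n" using DIM_positive[where 'a='a] by (simp add: n_def Suc_le_eq)
  obtain b where b: "bij_betw b {..<DIM('a)} (Basis::'a set)"
    using ex_bij_betw_nat_finite[of "Basis::'a set"] by (auto simp: atLeast0LessThan)
  have Kne: "K \<noteq> {}" using assms(3) by auto
  obtain R where R: "R > 0" "\<forall>y\<in>K. norm y \<le> R"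
    using compact_imp_bounded[OF assms(1)] by (auto simp: bounded_pos)
  obtain p where pK: "\<forall>i. p i \<in> K" and pD: "DM b n p \<noteq> 0"
  proof -
    obtain B where B: "B \<subseteq> K" "\<not> affine_dependent B" "affine hull K = affine hull B"
      using affine_basis_exists[of K] by blast
    have fB: "finite B" using aff_independent_finite[OF B(2)] .
    have "aff_dim B = int (card B) - 1" using aff_dim_affine_independent[OF B(2)] by simp
    moreover have "aff_dim B = int n"
      using assms(3) B(3) aff_dim_affine_hull[of B] aff_dim_affine_hull[of K] by (simp add: n_def)
    ultimately have cB: "card B = Suc n" by simp
    obtain q where q: "bij_betw q {0..<Suc n} B" using ex_bij_betw_nat_finite[OF fB] cB by auto
    obtain k0 where k0: "k0 \<in> K" using Kne by auto
    define p where "p i = (if i \<le> n then q i else k0)" for i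
    have qB: "q i \<in> B" if "i \<le> n" for i using q that by (auto simp: bij_betw_def)
    have pK: "\<forall>i. p i \<in> K" using qB B(1) k0 by (auto simp: p_def)
    have "DM b n p \<noteq> 0"
    proof
      assume "DM b n p = 0"
      then have "DM b DIM('a) p = 0" by (simp add: n_def)
      then obtain z c where zc: "z \<noteq> 0" "\<forall>r\<le>DIM('a). p r \<bullet> z = c"
        using DM_zero_hyp[OF b] by blast
      have "B \<subseteq> {y. z \<bullet> y = c}"
      proof
        fix y assume "y \<in> B"
        then obtain r where r: "r < Suc n" "y = q r" using q by (auto simp: bij_betw_def)
        then have "p r \<bullet> z = c" using zc(2) by (simp add: n_def)
        then show "y \<in> {y. z \<bullet> y = c}" using r by (simp add: p_def inner_commute)
      qed
      then have "affine hull B \<subseteq> {y. z \<bullet> y = c}" by (intro hull_minimal) (auto simp: affine_hyperplane)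
      then have "K \<subseteq> {y. z \<bullet> y = c}" using B(3) hull_subset[of K affine] by auto
      then have "aff_dim K \<le> aff_dim {y. z \<bullet> y = c}" by (rule aff_dim_subset)
      then show False using zc(1) assms(3) by simp
    qed
    then show ?thesis using that pK by blast
  qed
  define Q where "Q x = real (Suc n) * (\<Sum>j\<le>n. (norm (x j))\<^sup>2) - (norm (\<Sum>j\<le>n. x j))\<^sup>2"
    for x :: "nat \<Rightarrow> 'a"
  define B0 where "B0 = (real (Suc n) * R)\<^sup>2"
  have B0nn: "0 \<le> B0" by (simp add: B0_def)
  have Qb: "\<bar>Q x\<bar> \<le> B0" if xK: "\<forall>j. x j \<in> K" for x
  proof -
    have t1: "0 \<le> (\<Sum>j\<le>n. (norm (x j))\<^sup>2)" by (simp add: sum_nonneg)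
    have "(norm (x j))\<^sup>2 \<le> R\<^sup>2" for j using R xK by (intro power_mono) auto
    then have "(\<Sum>j\<le>n. (norm (x j))\<^sup>2) \<le> real (Suc n) * R\<^sup>2"
      using sum_bounded_above[of "{..n}" "\<lambda>j. (norm (x j))\<^sup>2" "R\<^sup>2"] by simp
    then have T1a: "real (Suc n) * (\<Sum>j\<le>n. (norm (x j))\<^sup>2) \<le> real (Suc n) * (real (Suc n) * R\<^sup>2)"
      by (rule mult_left_mono) simp
    have B0': "B0 = real (Suc n) * (real (Suc n) * R\<^sup>2)" by (simp add: B0_def power_mult_distrib power2_eq_square)
    have T1: "real (Suc n) * (\<Sum>j\<le>n. (norm (x j))\<^sup>2) \<le> B0" using T1a B0' by simp
    have T1': "0 \<le> real (Suc n) * (\<Sum>j\<le>n. (norm (x j))\<^sup>2)" using t1 by simp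
    have "norm (\<Sum>j\<le>n. x j) \<le> (\<Sum>j\<le>n. norm (x j))" by (rule norm_sum)
    also have "\<dots> \<le> real (Suc n) * R"
      using sum_bounded_above[of "{..n}" "\<lambda>j. norm (x j)" R] R xK by simp
    finally have "(norm (\<Sum>j\<le>n. x j))\<^sup>2 \<le> B0" unfolding B0_def by (intro power_mono) auto
    then show ?thesis using T1 T1' unfolding Q_def by (simp add: abs_le_iff) (smt (verit) zero_le_power2)
  qed
  define \<epsilon> where "\<epsilon> = \<bar>DM b n p\<bar> / (4 * B0 + 1)"
  have \<epsilon>pos: "\<epsilon> > 0" using pD B0nn by (simp add: \<epsilon>_def)
  define \<Phi> where "\<Phi> x = \<bar>DM b n x\<bar> + \<epsilon> * Q x" for x
  define X where "X = (Pi\<^sub>E UNIV (\<lambda>_::nat. K) :: (nat \<Rightarrow> 'a) set)"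
  have X: "x \<in> X \<longleftrightarrow> (\<forall>i. x i \<in> K)" for x by (simp add: X_def PiE_UNIV_domain Pi_iff)
  have cX: "compact X"
    using compactin_PiE[of "\<lambda>_::nat. (euclidean :: 'a topology)" UNIV "\<lambda>_. K"] assms(1)
    by (simp add: X_def euclidean_product_topology)
  have coord: "continuous_on UNIV (\<lambda>x::nat\<Rightarrow>'a. x j)" for j by (rule continuous_on_product_coordinates)
  have Qc: "continuous_on UNIV Q"
  proof -
    have a: "continuous_on UNIV (\<lambda>x::nat\<Rightarrow>'a. (norm (x j))\<^sup>2)" for j
      by (intro continuous_on_power continuous_on_norm coord)
    have c: "continuous_on UNIV (\<lambda>x::nat\<Rightarrow>'a. (\<Sum>j\<le>n. x j))"
      by (intro continuous_on_sum coord)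
    have "continuous_on UNIV (\<lambda>x::nat\<Rightarrow>'a. real (Suc n) * (\<Sum>j\<le>n. (norm (x j))\<^sup>2) - (norm (\<Sum>j\<le>n. x j))\<^sup>2)"
      by (intro continuous_on_diff continuous_on_mult continuous_on_const continuous_on_sum a
          continuous_on_power continuous_on_norm c)
    then show ?thesis unfolding Q_def[abs_def] .
  qed
  have \<Phi>c: "continuous_on X \<Phi>"
  proof -
    have "continuous_on UNIV \<Phi>" unfolding \<Phi>_def[abs_def]
      by (intro continuous_on_add continuous_on_rabs continuous_on_mult continuous_on_const DM_cont Qc)
    then show ?thesis by (rule continuous_on_subset) simp
  qed
  have pX: "p \<in> X" using pK X by simp
  obtain x where xX: "x \<in> X" and xmax: "\<forall>y\<in>X. \<Phi> y \<le> \<Phi> x"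
    using continuous_attains_sup[OF cX _ \<Phi>c] pX by blast
  have xK: "\<forall>i. x i \<in> K" using xX X by simp
  define \<Delta> where "\<Delta> = \<bar>DM b n x\<bar>"
  have \<Delta>pos: "\<Delta> > 0"
  proof -
    have "\<Phi> p \<le> \<Phi> x" using xmax pX by blast
    then have "\<bar>DM b n p\<bar> \<le> \<Delta> + \<epsilon> * (Q x - Q p)" by (simp add: \<Phi>_def \<Delta>_def algebra_simps)
    moreover have "Q x - Q p \<le> 2 * B0" using Qb[OF xK] Qb[OF pK] by (simp add: abs_le_iff)
    then have "\<epsilon> * (Q x - Q p) \<le> \<epsilon> * (2 * B0)" using \<epsilon>pos by (intro mult_left_mono) auto
    moreover have "\<epsilon> * (2 * B0) < \<bar>DM b n p\<bar>"
    proof -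
      have "\<epsilon> * (2 * B0) = \<bar>DM b n p\<bar> * (2 * B0 / (4 * B0 + 1))" by (simp add: \<epsilon>_def)
      also have "2 * B0 / (4 * B0 + 1) < 1" using B0nn by simp
      then have "\<bar>DM b n p\<bar> * (2 * B0 / (4 * B0 + 1)) < \<bar>DM b n p\<bar> * 1"
        using pD by (intro mult_strict_left_mono) auto
      finally show ?thesis by simp
    qed
    ultimately show ?thesis by linarith
  qed
  define \<sigma> where "\<sigma> = (if DM b n x \<ge> 0 then 1 else -1::real)"
  have \<sigma>D: "\<sigma> * DM b n x = \<Delta>" by (simp add: \<sigma>_def \<Delta>_def)
  have \<sigma>abs: "\<sigma> * t \<le> \<bar>t\<bar>" for t by (simp add: \<sigma>_def abs_ge_self abs_ge_minus_self)
  have "\<forall>i. \<exists>C W. i \<le> n \<longrightarrow> (\<forall>y. DM b n (x(i:=y)) = C + W \<bullet> y)"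
    using DM_affine_row by blast
  then obtain C W where CW: "\<And>i y. i \<le> n \<Longrightarrow> DM b n (x(i:=y)) = C i + W i \<bullet> y" by metis
  define w where "w i = \<sigma> *\<^sub>R W i" for i
  define c where "c i = - \<sigma> * C i" for i
  have wx: "w i \<bullet> x j = c i + (if j = i then \<Delta> else 0)" if "i \<le> n" "j \<le> n" for i j
  proof (cases "j = i")
    case True
    have "DM b n x = C i + W i \<bullet> x i" using CW[OF that(1), of "x i"] by simp
    then have "\<Delta> = \<sigma> * C i + \<sigma> * (W i \<bullet> x i)" using \<sigma>D by (simp add: algebra_simps)
    then show ?thesis using True by (simp add: w_def c_def)
  next
    case False
    have "DM b n (x(i:=x j)) = 0" by (rule DM_identical[of i n j]) (use that False in auto)
    then have "C i + W i \<bullet> x j = 0" using CW[OF that(1)] by simp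
    then have "W i \<bullet> x j = - C i" by linarith
    then have "\<sigma> * (W i \<bullet> x j) = - \<sigma> * C i" by simp
    then show ?thesis using False by (simp add: w_def c_def)
  qed
  define S where "S = (\<Sum>j\<le>n. x j)"
  define s where "s i = real (Suc n) *\<^sub>R x i - S" for i
  define m where "m i = w i + (2 * \<epsilon>) *\<^sub>R s i" for i
  have QU: "Q (x(i:=y)) - Q x = 2 * (s i \<bullet> (y - x i)) + real n * (norm (y - x i))\<^sup>2"
    if "i \<le> n" for i y
  proof -
    have s1: "(\<Sum>j\<le>n. (norm ((x(i:=y)) j))\<^sup>2) = (\<Sum>j\<le>n. (norm (x j))\<^sup>2) - (norm (x i))\<^sup>2 + (norm y)\<^sup>2"
      using sum_fun_upd_eq[of "{..n}" i "\<lambda>v. (norm v)\<^sup>2" x y] that by simp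
    have s2: "(\<Sum>j\<le>n. (x(i:=y)) j) = S - x i + y"
      using sum_fun_upd_eq[of "{..n}" i "\<lambda>v. v" x y] that by (simp add: S_def)
    have "Q (x(i:=y)) - Q x = real (Suc n) * ((norm y)\<^sup>2 - (norm (x i))\<^sup>2) - ((norm (S - x i + y))\<^sup>2 - (norm S)\<^sup>2)"
      unfolding Q_def s1 s2 S_def[symmetric] by (simp add: algebra_simps)
    also have "\<dots> = 2 * (s i \<bullet> (y - x i)) + real n * (norm (y - x i))\<^sup>2"
      unfolding s_def by (rule QU_alg)
    finally show ?thesis .
  qed
  have mneg: "m i \<bullet> (y - x i) \<le> - (\<epsilon> * (real n * (norm (y - x i))\<^sup>2))" if i: "i \<le> n" and y: "y \<in> K" for i y
  proof -
    have xyX: "x(i:=y) \<in> X" using X xK y by auto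
    have 1: "\<Phi> (x(i:=y)) \<le> \<Phi> x" using xmax xyX by blast
    have 2: "\<sigma> * DM b n (x(i:=y)) \<le> \<bar>DM b n (x(i:=y))\<bar>" by (rule \<sigma>abs)
    have 3: "DM b n (x(i:=y)) = C i + W i \<bullet> y" by (rule CW[OF i])
    have 4: "DM b n x = C i + W i \<bullet> x i" using CW[OF i, of "x i"] by simp
    have 5: "\<epsilon> * Q (x(i:=y)) - \<epsilon> * Q x = \<epsilon> * (2 * (s i \<bullet> (y - x i))) + \<epsilon> * (real n * (norm (y - x i))\<^sup>2)"
    proof -
      have "\<epsilon> * (Q (x(i:=y)) - Q x) = \<epsilon> * (2 * (s i \<bullet> (y - x i)) + real n * (norm (y - x i))\<^sup>2)"
        using QU[OF i, of y] by simp
      then show ?thesis by (simp only: right_diff_distrib distrib_left)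
    qed
    have 6: "m i \<bullet> (y - x i) = \<sigma> * (W i \<bullet> y) - \<sigma> * (W i \<bullet> x i) + \<epsilon> * (2 * (s i \<bullet> (y - x i)))"
      by (simp add: m_def w_def inner_add_left inner_diff_right algebra_simps)
    have 7: "\<sigma> * DM b n (x(i:=y)) = \<sigma> * C i + \<sigma> * (W i \<bullet> y)" using 3 by (simp add: algebra_simps)
    have 8: "\<sigma> * DM b n x = \<sigma> * C i + \<sigma> * (W i \<bullet> x i)" using 4 by (simp add: algebra_simps)
    have 9: "\<bar>DM b n x\<bar> = \<sigma> * DM b n x" using \<sigma>D \<Delta>_def by simp
    show ?thesis using 1 2 5 6 7 8 9 unfolding \<Phi>_def by linarith
  qed
  have mstrict: "m i \<bullet> (y - x i) < 0" if i: "i \<le> n" and y: "y \<in> K" and yx: "y \<noteq> x i" for i y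
  proof -
    have "0 < \<epsilon> * (real n * (norm (y - x i))\<^sup>2)" using \<epsilon>pos n1 yx by simp
    then show ?thesis using mneg[OF i y] by linarith
  qed
  have wsum: "(\<Sum>i\<le>n. w i) = 0"
  proof (rule ccontr)
    assume z: "(\<Sum>i\<le>n. w i) \<noteq> 0"
    have "x r \<bullet> (\<Sum>i\<le>n. w i) = (\<Sum>i\<le>n. c i) + \<Delta>" if r: "r \<le> DIM('a)" for r
    proof -
      have "x r \<bullet> (\<Sum>i\<le>n. w i) = (\<Sum>i\<le>n. w i \<bullet> x r)" by (simp add: inner_sum_right inner_commute)
      also have "\<dots> = (\<Sum>i\<le>n. c i + (if r = i then \<Delta> else 0))"
        by (rule sum.cong) (use r in \<open>auto simp: wx n_def\<close>)
      also have "\<dots> = (\<Sum>i\<le>n. c i) + \<Delta>" using r by (simp add: sum.distrib n_def)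
      finally show ?thesis .
    qed
    then have "DM b DIM('a) x = 0" using hyp_DM_zero[OF b z] by blast
    then show False using \<Delta>pos \<Delta>_def n_def by simp
  qed
  have ssum: "(\<Sum>i\<le>n. s i) = 0"
    by (simp add: s_def sum_subtractf scaleR_sum_right[symmetric] S_def[symmetric] sum_constant_scaleR)
  have msum: "(\<Sum>i\<le>n. m i) = 0"
    by (simp add: m_def sum.distrib scaleR_sum_right[symmetric] wsum ssum)
  have mind: "\<forall>i\<le>n. \<alpha> i = 0"
    if k: "k \<le> n" "\<alpha> k = 0" and z: "(\<Sum>i\<le>n. \<alpha> i *\<^sub>R m i) = 0" for \<alpha> k
  proof -
    define E where "E = (\<Sum>i\<le>n. \<alpha> i *\<^sub>R s i)"
    have eq: "\<Delta> * (\<alpha> j - \<alpha> l) + 2 * \<epsilon> * (E \<bullet> (x j - x l)) = 0" if jl: "j \<le> n" "l \<le> n" for j l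
    proof -
      have "0 = (\<Sum>i\<le>n. \<alpha> i *\<^sub>R m i) \<bullet> (x j - x l)" using z by simp
      also have "\<dots> = (\<Sum>i\<le>n. \<alpha> i * (w i \<bullet> (x j - x l))) + 2 * \<epsilon> * (E \<bullet> (x j - x l))"
        by (simp add: m_def E_def inner_sum_left inner_add_left sum.distrib sum_distrib_left sum_subtractf algebra_simps)
      also have "(\<Sum>i\<le>n. \<alpha> i * (w i \<bullet> (x j - x l))) =
                 (\<Sum>i\<le>n. \<alpha> i * ((if j = i then \<Delta> else 0) - (if l = i then \<Delta> else 0)))"
        by (rule sum.cong) (use jl in \<open>auto simp: inner_diff_right wx\<close>)
      also have "\<dots> = (\<Sum>i\<le>n. (if i = j then \<alpha> i * \<Delta> else 0) - (if i = l then \<alpha> i * \<Delta> else 0))"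
        by (rule sum.cong) auto
      also have "\<dots> = \<Delta> * (\<alpha> j - \<alpha> l)" using jl by (simp add: sum_subtractf algebra_simps)
      finally show ?thesis by simp
    qed
    define T where "T = (\<Sum>j\<le>n. \<Sum>l\<le>n. (\<alpha> j - \<alpha> l)\<^sup>2)"
    have "0 = (\<Sum>j\<le>n. \<Sum>l\<le>n. (\<alpha> j - \<alpha> l) * (\<Delta> * (\<alpha> j - \<alpha> l) + 2 * \<epsilon> * (E \<bullet> (x j - x l))))"
      using eq by simp
    also have "\<dots> = \<Delta> * T + 2 * \<epsilon> * (E \<bullet> (\<Sum>j\<le>n. \<Sum>l\<le>n. (\<alpha> j - \<alpha> l) *\<^sub>R (x j - x l)))"
    proof -
      have t: "(a - b) * (\<Delta> * (a - b) + 2 * \<epsilon> * (E \<bullet> v)) = \<Delta> * (a - b)\<^sup>2 + 2 * \<epsilon> * (E \<bullet> ((a - b) *\<^sub>R v))"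
        for a b :: real and v :: 'a by (simp add: power2_eq_square algebra_simps)
      show ?thesis unfolding t T_def by (simp add: sum.distrib sum_distrib_left inner_sum_right)
    qed
    also have "(\<Sum>j\<le>n. \<Sum>l\<le>n. (\<alpha> j - \<alpha> l) *\<^sub>R (x j - x l)) = 2 *\<^sub>R E"
      using double_sum_diff[of "{..n}" \<alpha> x] by (simp add: E_def s_def S_def)
    finally have T0: "\<Delta> * T + 4 * \<epsilon> * (E \<bullet> E) = 0" by simp
    have "0 \<le> T" unfolding T_def by (intro sum_nonneg) simp
    moreover have "0 \<le> \<epsilon> * (E \<bullet> E)" using \<epsilon>pos by simp
    moreover have "0 \<le> \<Delta> * T" using \<Delta>pos \<open>0 \<le> T\<close> by simp
    moreover have "4 * \<epsilon> * (E \<bullet> E) = 4 * (\<epsilon> * (E \<bullet> E))" by simp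
    ultimately have "\<Delta> * T = 0" using T0 by linarith
    then have "T = 0" using \<Delta>pos by simp
    then have "\<alpha> j = \<alpha> k" if "j \<le> n" for j using double_sum_sq[of "{..n}" \<alpha> j k] that k by (simp add: T_def)
    then show ?thesis using k by simp
  qed
  have xinj: "inj_on x {..n}"
  proof (rule inj_onI, rule ccontr)
    fix i j assume ij: "i \<in> {..n}" "j \<in> {..n}" "x i = x j" "i \<noteq> j"
    then have "DM b n x = 0" using DM_identical[of i n j x b] by auto
    then show False using \<Delta>pos \<Delta>_def by simp
  qed
  have mnz: "m i \<noteq> 0" if i: "i \<le> n" for i
  proof
    assume mi: "m i = 0"
    define k where "k = (if i = 0 then 1 else (0::nat))"
    have k: "k \<le> n" "k \<noteq> i" using n1 by (auto simp: k_def)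
    have "(\<Sum>j\<le>n. (if j = i then 1 else 0) *\<^sub>R m j) = (\<Sum>j\<le>n. if j = i then m j else 0)"
      by (rule sum.cong) auto
    also have "\<dots> = 0" using i mi by simp
    finally have "\<forall>j\<le>n. (if j = i then 1 else (0::real)) = 0"
      using mind[of k "\<lambda>j. if j = i then 1 else 0"] k by auto
    then show False using i by auto
  qed
  have reg: "regular_normal_at K (m i /\<^sub>R norm (m i)) (x i)" if i: "i \<le> n" for i
  proof -
    have nm: "norm (m i) > 0" using mnz[OF i] by simp
    have dotu: "z \<bullet> (m i /\<^sub>R norm (m i)) = (z \<bullet> m i) / norm (m i)" for z
      by (simp add: divide_inverse)
    have le: "y \<bullet> m i \<le> x i \<bullet> m i" if y: "y \<in> K" for y
      using mneg[OF i y] \<epsilon>pos by (simp add: inner_diff_right inner_commute)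
        (smt (verit) mult_nonneg_nonneg of_nat_0_le_iff zero_le_power2)
    have lt: "y \<bullet> m i < x i \<bullet> m i" if y: "y \<in> K" "y \<noteq> x i" for y
      using mstrict[OF i y] by (simp add: inner_diff_right inner_commute)
    have sf: "support_fun K (m i /\<^sub>R norm (m i)) = x i \<bullet> (m i /\<^sub>R norm (m i))"
      unfolding support_fun_def
    proof (rule cSup_eq_maximum)
      show "x i \<bullet> (m i /\<^sub>R norm (m i)) \<in> (\<lambda>z. z \<bullet> (m i /\<^sub>R norm (m i))) ` K" using xK by blast
    next
      fix t assume "t \<in> (\<lambda>z. z \<bullet> (m i /\<^sub>R norm (m i))) ` K"
      then obtain y where y: "y \<in> K" "t = y \<bullet> (m i /\<^sub>R norm (m i))" by auto
      show "t \<le> x i \<bullet> (m i /\<^sub>R norm (m i))" using le[OF y(1)] nm y(2) dotu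
        by (simp add: divide_right_mono)
    qed
    have "support_face K (m i /\<^sub>R norm (m i)) = {x i}"
    proof
      show "{x i} \<subseteq> support_face K (m i /\<^sub>R norm (m i))" using xK sf by (simp add: support_face_def)
      show "support_face K (m i /\<^sub>R norm (m i)) \<subseteq> {x i}"
      proof
        fix y assume "y \<in> support_face K (m i /\<^sub>R norm (m i))"
        then have y: "y \<in> K" "y \<bullet> m i / norm (m i) = x i \<bullet> m i / norm (m i)"
          using sf dotu by (auto simp: support_face_def)
        then have "y \<bullet> m i = x i \<bullet> m i" using nm by (simp add: divide_cancel_right)
        then show "y \<in> {x i}" using lt[OF y(1)] by fastforce
      qed
    qed
    then show ?thesis using nm by (simp add: regular_normal_at_def)
  qed
  have simp_u: "simplex_facet_normals (\<lambda>i. m i /\<^sub>R norm (m i))"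
    by (rule simplex_from_normals) (use msum mind in \<open>auto simp: n_def\<close>)
  show ?thesis
    by (rule exI[of _ "\<lambda>i. m i /\<^sub>R norm (m i)"], rule exI[of _ x])
       (use xinj reg simp_u in \<open>auto simp: n_def\<close>)
qed

end
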